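(* The convex Vietoris functor $\mathbb{V}^{\mathrm{c}}\colon\mathbf{CompOrd}\to\mathbf{CompOrd}$ preserves coreflexive equalizers: if $f,g\colon X\to Y$ are morphisms in $\mathbf{CompOrd}$ with a common retraction $k\colon Y\to X$ ($k\circ f=k\circ g=1_X$) and $h\colon E\to X$ is an equalizer of $f,g$ in $\mathbf{CompOrd}$, then $\mathbb{V}^{\mathrm{c}}h$ is an equalizer of $\mathbb{V}^{\mathrm{c}}f$ and $\mathbb{V}^{\mathrm{c}}g$ in $\mathbf{CompOrd}$.
   Context: $\mathbf{CompOrd}$ is the category of compact ordered spaces (compact Hausdorff spaces with a partial order closed in $X\times X$) and continuous order-preserving maps. For a subset $Y$ of a poset, $\uparrow Y$, $\downarrow Y$ are up- and down-closure; $Y$ is convex if $y_1\le x\le y_2$ with $y_1,y_2\in Y$ implies $x\in Y$; $\updownarrow Y=\uparrow Y\cap\downarrow Y$. $\mathbb{V}^{\mathrm{c}}X$ is the set of closed convex subsets of $X$ (including $\varnothing$) with the topology generated by $\Diamond U=\{K\mid K\cap U\neq\varnothing\}$ and $\Box U=\{K\mid K\subseteq U\}$ ($U$ open upset or open downset of $X$) and the Egli–Milner order $K\le_{\mathrm{EM}}L$ iff $\uparrow L\subseteq\uparrow K$ and $\downarrow K\subseteq\downarrow L$; it is a compact ordered space, and $\mathbb{V}^{\mathrm{c}}f(K)=\updownarrow f[K]$ defines an endofunctor. *)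

theory Defs
  imports "HOL-Analysis.Analysis"
begin

definition compord :: "'a topology \<Rightarrow> ('a \<Rightarrow> 'a \<Rightarrow> bool) \<Rightarrow> bool" where
  "compord T le \<longleftrightarrow>
     compact_space T \<and> Hausdorff_space T \<and>
     (\<forall>x\<in>topspace T. le x x) \<and>
     (\<forall>x\<in>topspace T. \<forall>y\<in>topspace T. \<forall>z\<in>topspace T. le x y \<and> le y z \<longrightarrow> le x z) \<and>
     (\<forall>x\<in>topspace T. \<forall>y\<in>topspace T. le x y \<and> le y x \<longrightarrow> x = y) \<and>
     closedin (prod_topology T T) {(x, y). x \<in> topspace T \<and> y \<in> topspace T \<and> le x y}"

definition compord_mor ::
  "'a topology \<Rightarrow> ('a \<Rightarrow> 'a \<Rightarrow> bool) \<Rightarrow> 'b topology \<Rightarrow> ('b \<Rightarrow> 'b \<Rightarrow> bool) \<Rightarrow> ('a \<Rightarrow> 'b) \<Rightarrow> bool" where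
  "compord_mor T le S le' f \<longleftrightarrow>
     continuous_map T S f \<and>
     (\<forall>x\<in>topspace T. \<forall>y\<in>topspace T. le x y \<longrightarrow> le' (f x) (f y))"

definition upc :: "'a topology \<Rightarrow> ('a \<Rightarrow> 'a \<Rightarrow> bool) \<Rightarrow> 'a set \<Rightarrow> 'a set" where
  "upc T le Y = {x \<in> topspace T. \<exists>y\<in>Y. le y x}"

definition downc :: "'a topology \<Rightarrow> ('a \<Rightarrow> 'a \<Rightarrow> bool) \<Rightarrow> 'a set \<Rightarrow> 'a set" where
  "downc T le Y = {x \<in> topspace T. \<exists>y\<in>Y. le x y}"

definition updownc :: "'a topology \<Rightarrow> ('a \<Rightarrow> 'a \<Rightarrow> bool) \<Rightarrow> 'a set \<Rightarrow> 'a set" where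
  "updownc T le Y = upc T le Y \<inter> downc T le Y"

definition convex_set :: "'a topology \<Rightarrow> ('a \<Rightarrow> 'a \<Rightarrow> bool) \<Rightarrow> 'a set \<Rightarrow> bool" where
  "convex_set T le Y \<longleftrightarrow>
     (\<forall>y1\<in>Y. \<forall>y2\<in>Y. \<forall>x\<in>topspace T. le y1 x \<and> le x y2 \<longrightarrow> x \<in> Y)"

definition is_upset :: "'a topology \<Rightarrow> ('a \<Rightarrow> 'a \<Rightarrow> bool) \<Rightarrow> 'a set \<Rightarrow> bool" where
  "is_upset T le U \<longleftrightarrow> U \<subseteq> topspace T \<and> upc T le U \<subseteq> U"

definition is_downset :: "'a topology \<Rightarrow> ('a \<Rightarrow> 'a \<Rightarrow> bool) \<Rightarrow> 'a set \<Rightarrow> bool" where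
  "is_downset T le U \<longleftrightarrow> U \<subseteq> topspace T \<and> downc T le U \<subseteq> U"

text \<open>Carrier of the convex Vietoris space: closed convex subsets (including the empty set).\<close>

definition vc_set :: "'a topology \<Rightarrow> ('a \<Rightarrow> 'a \<Rightarrow> bool) \<Rightarrow> 'a set set" where
  "vc_set T le = {K. closedin T K \<and> convex_set T le K}"

definition vc_diamond :: "'a topology \<Rightarrow> ('a \<Rightarrow> 'a \<Rightarrow> bool) \<Rightarrow> 'a set \<Rightarrow> 'a set set" where
  "vc_diamond T le U = {K \<in> vc_set T le. K \<inter> U \<noteq> {}}"

definition vc_box :: "'a topology \<Rightarrow> ('a \<Rightarrow> 'a \<Rightarrow> bool) \<Rightarrow> 'a set \<Rightarrow> 'a set set" where
  "vc_box T le U = {K \<in> vc_set T le. K \<subseteq> U}"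

definition open_updown :: "'a topology \<Rightarrow> ('a \<Rightarrow> 'a \<Rightarrow> bool) \<Rightarrow> 'a set \<Rightarrow> bool" where
  "open_updown T le U \<longleftrightarrow> openin T U \<and> (is_upset T le U \<or> is_downset T le U)"

text \<open>Topology on V^c X generated by the subbasis of all diamond U and box U, U an open upset or
  open downset.  (Its topspace is vc_set, since box (topspace T) = vc_set.)\<close>

definition vc_top :: "'a topology \<Rightarrow> ('a \<Rightarrow> 'a \<Rightarrow> bool) \<Rightarrow> 'a set topology" where
  "vc_top T le = topology_generated_by
     ({vc_diamond T le U | U. open_updown T le U} \<union> {vc_box T le U | U. open_updown T le U})"

definition vc_le :: "'a topology \<Rightarrow> ('a \<Rightarrow> 'a \<Rightarrow> bool) \<Rightarrow> 'a set \<Rightarrow> 'a set \<Rightarrow> bool" where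
  "vc_le T le K L \<longleftrightarrow> upc T le L \<subseteq> upc T le K \<and> downc T le K \<subseteq> downc T le L"

definition vc_map :: "'b topology \<Rightarrow> ('b \<Rightarrow> 'b \<Rightarrow> bool) \<Rightarrow> ('a \<Rightarrow> 'b) \<Rightarrow> 'a set \<Rightarrow> 'b set" where
  "vc_map S le' f K = updownc S le' (f ` K)"

text \<open>Equalizer in CompOrd.  HOL cannot quantify over types inside a formula, so the universal
  property is stated for test objects Z whose points are of a given type 'z.\<close>

definition is_equalizer_wrt :: "'z itself \<Rightarrow>
    'e topology \<Rightarrow> ('e \<Rightarrow> 'e \<Rightarrow> bool) \<Rightarrow> 'x topology \<Rightarrow> ('x \<Rightarrow> 'x \<Rightarrow> bool) \<Rightarrow>
    'y topology \<Rightarrow> ('y \<Rightarrow> 'y \<Rightarrow> bool) \<Rightarrow> ('e \<Rightarrow> 'x) \<Rightarrow> ('x \<Rightarrow> 'y) \<Rightarrow> ('x \<Rightarrow> 'y) \<Rightarrow> bool" where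
  "is_equalizer_wrt _ TE leE TX leX TY leY h f g \<longleftrightarrow>
     compord TE leE \<and> compord_mor TE leE TX leX h \<and>
     (\<forall>e\<in>topspace TE. f (h e) = g (h e)) \<and>
     (\<forall>(TZ :: 'z topology) leZ z.
        compord TZ leZ \<and> compord_mor TZ leZ TX leX z \<and> (\<forall>w\<in>topspace TZ. f (z w) = g (z w)) \<longrightarrow>
        (\<exists>u. compord_mor TZ leZ TE leE u \<and> (\<forall>w\<in>topspace TZ. h (u w) = z w) \<and>
             (\<forall>u'. compord_mor TZ leZ TE leE u' \<and> (\<forall>w\<in>topspace TZ. h (u' w) = z w) \<longrightarrow>
                   (\<forall>w\<in>topspace TZ. u' w = u w))))"

end

theory Submission
  imports Defs
begin


locale co =
  fixes T :: "'a topology" and le :: "'a \<Rightarrow> 'a \<Rightarrow> bool"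
  assumes co: "compord T le"
begin

abbreviation "S \<equiv> topspace T"

lemma cpt: "compact_space T" and hd: "Hausdorff_space T"
  and refl: "x \<in> S \<Longrightarrow> le x x"
  and trans: "x \<in> S \<Longrightarrow> y \<in> S \<Longrightarrow> z \<in> S \<Longrightarrow> le x y \<Longrightarrow> le y z \<Longrightarrow> le x z"
  and antisym: "x \<in> S \<Longrightarrow> y \<in> S \<Longrightarrow> le x y \<Longrightarrow> le y x \<Longrightarrow> x = y"
  and gcl: "closedin (prod_topology T T) {(x, y). x \<in> S \<and> y \<in> S \<and> le x y}"
  using co unfolding compord_def by blast+

lemma upc_closed:
  assumes "closedin T A" shows "closedin T (upc T le A)"
proof -
  let ?G = "{(x, y). x \<in> S \<and> y \<in> S \<and> le x y} \<inter> (A \<times> S)"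
  have "closedin (prod_topology T T) ?G"
    by (intro closedin_Int gcl) (simp add: closedin_prod_Times_iff assms)
  then have "compactin (prod_topology T T) ?G"
    by (simp add: closedin_compact_space compact_space_prod_topology cpt)
  then have "compactin T (snd ` ?G)"
    using image_compactin continuous_map_snd by blast
  moreover have "snd ` ?G = upc T le A"
  proof
    show "snd ` ?G \<subseteq> upc T le A" unfolding upc_def by auto
    show "upc T le A \<subseteq> snd ` ?G"
    proof
      fix x assume "x \<in> upc T le A"
      then obtain y where "x \<in> S" "y \<in> A" "le y x" unfolding upc_def by auto
      then have "(y, x) \<in> ?G" using closedin_subset[OF assms] by auto
      then show "x \<in> snd ` ?G" by force
    qed
  qed
  ultimately show ?thesis using compactin_imp_closedin hd by metis
qed

lemma downc_closed:
  assumes "closedin T A" shows "closedin T (downc T le A)"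
proof -
  let ?G = "{(x, y). x \<in> S \<and> y \<in> S \<and> le x y} \<inter> (S \<times> A)"
  have "closedin (prod_topology T T) ?G"
    by (intro closedin_Int gcl) (simp add: closedin_prod_Times_iff assms)
  then have "compactin (prod_topology T T) ?G"
    by (simp add: closedin_compact_space compact_space_prod_topology cpt)
  then have "compactin T (fst ` ?G)"
    using image_compactin continuous_map_fst by blast
  moreover have "fst ` ?G = downc T le A"
  proof
    show "fst ` ?G \<subseteq> downc T le A" unfolding downc_def by auto
    show "downc T le A \<subseteq> fst ` ?G"
    proof
      fix x assume "x \<in> downc T le A"
      then obtain y where "x \<in> S" "y \<in> A" "le x y" unfolding downc_def by auto
      then have "(x, y) \<in> ?G" using closedin_subset[OF assms] by auto
      then show "x \<in> fst ` ?G" by force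
    qed
  qed
  ultimately show ?thesis using compactin_imp_closedin hd by metis
qed

lemma nachbin:
  assumes A: "closedin T A" "is_upset T le A" and B: "closedin T B" "is_downset T le B"
    and dis: "A \<inter> B = {}"
  obtains U V where "openin T U" "is_upset T le U" "A \<subseteq> U"
    "openin T V" "is_downset T le V" "B \<subseteq> V" "U \<inter> V = {}"
proof -
  let ?G = "{(x, y). x \<in> S \<and> y \<in> S \<and> le x y}"
  have W: "openin (prod_topology T T) (S \<times> S - ?G)"
    using gcl by (simp add: closedin_def)
  have AS: "A \<subseteq> S" and BS: "B \<subseteq> S" using A B closedin_subset by auto
  have AB: "A \<times> B \<subseteq> S \<times> S - ?G"
  proof (rule subsetI)
    fix p assume p: "p \<in> A \<times> B"
    then obtain a b where ab: "p = (a, b)" "a \<in> A" "b \<in> B" by blast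
    have "\<not> le a b"
    proof
      assume "le a b"
      then have "b \<in> upc T le A" using BS ab unfolding upc_def by auto
      then show False using A(2) dis ab unfolding is_upset_def by auto
    qed
    then show "p \<in> S \<times> S - ?G" using ab AS BS by auto
  qed
  obtain U0 V0 where U0: "openin T U0" and V0: "openin T V0" and "A \<subseteq> U0" "B \<subseteq> V0"
    and UV0: "U0 \<times> V0 \<subseteq> S \<times> S - ?G"
    by (rule Wallace_theorem_prod_topology[OF closedin_compact_space[OF cpt A(1)]
        closedin_compact_space[OF cpt B(1)] W AB])
  define U where "U = S - downc T le (S - U0)"
  define V where "V = S - upc T le (S - V0)"
  have "openin T U" unfolding U_def
    by (intro openin_diff openin_topspace downc_closed) (simp add: U0 closedin_diff)
  moreover have "openin T V" unfolding V_def
    by (intro openin_diff openin_topspace upc_closed) (simp add: V0 closedin_diff)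
  moreover have "is_upset T le U"
    unfolding is_upset_def
  proof
    show "U \<subseteq> S" unfolding U_def by auto
    show "upc T le U \<subseteq> U"
    proof
      fix y assume "y \<in> upc T le U"
      then obtain x where x: "y \<in> S" "x \<in> U" "le x y" unfolding upc_def by auto
      show "y \<in> U"
      proof (rule ccontr)
        assume "y \<notin> U"
        then obtain w where w: "w \<in> S - U0" "le y w" using x(1) unfolding U_def downc_def by auto
        have "x \<in> S" using x unfolding U_def by auto
        then have "le x w" using trans[of x y w] x w by auto
        then have "x \<in> downc T le (S - U0)" using w \<open>x \<in> S\<close> unfolding downc_def by auto
        then show False using x(2) unfolding U_def by auto
      qed
    qed
  qed
  moreover have "is_downset T le V"
    unfolding is_downset_def
  proof
    show "V \<subseteq> S" unfolding V_def by auto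
    show "downc T le V \<subseteq> V"
    proof
      fix y assume "y \<in> downc T le V"
      then obtain x where x: "y \<in> S" "x \<in> V" "le y x" unfolding downc_def by auto
      show "y \<in> V"
      proof (rule ccontr)
        assume "y \<notin> V"
        then obtain w where w: "w \<in> S - V0" "le w y" using x(1) unfolding V_def upc_def by auto
        have "x \<in> S" using x unfolding V_def by auto
        then have "le w x" using trans[of w y x] x w by auto
        then have "x \<in> upc T le (S - V0)" using w \<open>x \<in> S\<close> unfolding upc_def by auto
        then show False using x(2) unfolding V_def by auto
      qed
    qed
  qed
  moreover have "A \<subseteq> U"
  proof
    fix a assume a: "a \<in> A"
    show "a \<in> U" unfolding U_def
    proof
      show "a \<in> S" using a AS by auto
      show "a \<notin> downc T le (S - U0)"
      proof
        assume "a \<in> downc T le (S - U0)"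
        then obtain w where w: "w \<in> S - U0" "le a w" unfolding downc_def by auto
        then have "w \<in> upc T le A" using a unfolding upc_def by auto
        then have "w \<in> A" using A(2) unfolding is_upset_def by auto
        then show False using w \<open>A \<subseteq> U0\<close> by auto
      qed
    qed
  qed
  moreover have "B \<subseteq> V"
  proof
    fix a assume a: "a \<in> B"
    show "a \<in> V" unfolding V_def
    proof
      show "a \<in> S" using a BS by auto
      show "a \<notin> upc T le (S - V0)"
      proof
        assume "a \<in> upc T le (S - V0)"
        then obtain w where w: "w \<in> S - V0" "le w a" unfolding upc_def by auto
        then have "w \<in> downc T le B" using a unfolding downc_def by auto
        then have "w \<in> B" using B(2) unfolding is_downset_def by auto
        then show False using w \<open>B \<subseteq> V0\<close> by auto
      qed
    qed
  qed
  moreover have "U \<inter> V = {}"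
  proof (rule ccontr)
    assume "U \<inter> V \<noteq> {}"
    then obtain x where x: "x \<in> U" "x \<in> V" by blast
    then have "x \<in> S" unfolding U_def by auto
    then have "x \<in> U0" "x \<in> V0" using x refl[of x] unfolding U_def V_def upc_def downc_def by auto
    then show False using UV0 refl[OF \<open>x \<in> S\<close>] by auto
  qed
  ultimately show ?thesis using that by blast
qed

lemma upc_single_closed: "x \<in> S \<Longrightarrow> closedin T (upc T le {x})"
  by (intro upc_closed closedin_t1_singleton Hausdorff_imp_t1_space hd)

lemma downc_single_closed: "x \<in> S \<Longrightarrow> closedin T (downc T le {x})"
  by (intro downc_closed closedin_t1_singleton Hausdorff_imp_t1_space hd)

lemma upc_upset: assumes "A \<subseteq> S" shows "is_upset T le (upc T le A)"
  unfolding is_upset_def upc_def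
proof safe
  fix x y z assume "y \<in> S" "z \<in> A" "le z y" "x \<in> S" "le y x"
  then show "\<exists>y\<in>A. le y x" using trans[of z y x] assms by auto
qed

lemma downc_downset: assumes "A \<subseteq> S" shows "is_downset T le (downc T le A)"
  unfolding is_downset_def downc_def
proof safe
  fix x y z assume "y \<in> S" "z \<in> A" "le y z" "x \<in> S" "le x y"
  then show "\<exists>y\<in>A. le x y" using trans[of x y z] assms by auto
qed

end


context co begin

lemma exists_min:
  assumes L: "closedin T L" and x: "x \<in> L"
  obtains m where "m \<in> L" "le m x" "\<forall>y\<in>L. le y m \<longrightarrow> y = m"
proof -
  have LS: "L \<subseteq> S" using closedin_subset[OF L] .
  define D where "D = L \<inter> downc T le {x}"
  define P where "P = (\<lambda>y. L \<inter> downc T le {y})"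
  define \<A> where "\<A> = (\<lambda>y. S - P y) ` D"
  have xD: "x \<in> D" using x LS refl unfolding D_def downc_def by auto
  have PS: "P y \<subseteq> S" for y unfolding P_def using LS by auto
  have Pmono: "P y0 \<subseteq> P y" if "y0 \<in> S" "y \<in> S" "le y0 y" for y0 y
    using that trans unfolding P_def downc_def by blast
  have "\<forall>C\<in>chains \<A>. \<exists>U\<in>\<A>. \<forall>X\<in>C. X \<subseteq> U"
  proof
    fix C assume C: "C \<in> chains \<A>"
    show "\<exists>U\<in>\<A>. \<forall>X\<in>C. X \<subseteq> U"
    proof (cases "C = {}")
      case True then show ?thesis using xD unfolding \<A>_def by auto
    next
      case False
      define Y where "Y = {y \<in> D. S - P y \<in> C}"
      have CY: "C = (\<lambda>y. S - P y) ` Y"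
        using chainsD2[OF C] unfolding Y_def \<A>_def by auto
      have "Y \<noteq> {}" using False CY by auto
      have fip: "\<And>\<U>. (\<forall>C\<in>\<U>. closedin T C) \<Longrightarrow> (\<forall>F. finite F \<and> F \<subseteq> \<U> \<longrightarrow> \<Inter>F \<noteq> {}) \<Longrightarrow> \<Inter>\<U> \<noteq> {}"
        using cpt unfolding compact_space_fip by blast
      have "\<Inter>(P ` Y) \<noteq> {}"
      proof (rule fip)
        show "\<forall>Q\<in>P ` Y. closedin T Q"
          unfolding P_def using L downc_single_closed Y_def D_def LS by auto
        show "\<forall>F. finite F \<and> F \<subseteq> P ` Y \<longrightarrow> \<Inter> F \<noteq> {}"
        proof (intro allI impI, elim conjE)
          fix F assume F: "finite F" "F \<subseteq> P ` Y"
          show "\<Inter> F \<noteq> {}"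
          proof (cases "F = {}")
            case True then show ?thesis by auto
          next
            case False
            have "subset.chain F F"
              unfolding subset_chain_def
            proof (intro conjI ballI subset_refl)
              fix A B assume "A \<in> F" "B \<in> F"
              then obtain a b where ab: "a \<in> Y" "b \<in> Y" "A = P a" "B = P b" using F by blast
              then have "S - P a \<in> C" "S - P b \<in> C" unfolding Y_def by auto
              then have "S - P a \<subseteq> S - P b \<or> S - P b \<subseteq> S - P a" using chainsD[OF C] by blast
              then show "A \<subseteq> B \<or> B \<subseteq> A" using ab PS by blast
            qed
            then have "\<Inter>F \<in> F" using Inter_in_chain F False by blast
            then obtain a where a: "a \<in> Y" "\<Inter>F = P a" using F by blast
            then have "a \<in> P a" using refl LS unfolding Y_def D_def P_def downc_def by auto
            then show ?thesis using a by auto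
          qed
        qed
      qed
      then obtain y0 where y0: "\<forall>y\<in>Y. y0 \<in> P y" by blast
      obtain y1 where y1: "y1 \<in> Y" using \<open>Y \<noteq> {}\<close> by blast
      have y0L: "y0 \<in> L" "le y0 y1" using y0 y1 unfolding P_def downc_def by auto
      have y1x: "y1 \<in> L" "le y1 x" using y1 unfolding Y_def D_def downc_def by auto
      have "y0 \<in> D" unfolding D_def downc_def
        using y0L y1x LS x trans[of y0 y1 x] by auto
      moreover have "\<forall>X\<in>C. X \<subseteq> S - P y0"
      proof
        fix X assume "X \<in> C"
        then obtain y where y: "y \<in> Y" "X = S - P y" using CY by auto
        have "le y0 y" "y \<in> S" "y0 \<in> S" using y0 y LS unfolding P_def downc_def Y_def D_def by auto
        then have "P y0 \<subseteq> P y" using Pmono by auto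
        then show "X \<subseteq> S - P y0" using y by auto
      qed
      ultimately show ?thesis unfolding \<A>_def by auto
    qed
  qed
  then obtain M where M: "M \<in> \<A>" "\<forall>X\<in>\<A>. M \<subseteq> X \<longrightarrow> X = M" by (rule Zorn_Lemma2[THEN bexE])
  then obtain m where m: "m \<in> D" "M = S - P m" unfolding \<A>_def by auto
  have "\<forall>y\<in>L. le y m \<longrightarrow> y = m"
  proof (intro ballI impI)
    fix y assume y: "y \<in> L" "le y m"
    have mS: "m \<in> S" "m \<in> L" "le m x" using m LS unfolding D_def downc_def by auto
    have yS: "y \<in> S" using y LS by auto
    have "y \<in> D" using y mS yS trans[of y m x] x LS unfolding D_def downc_def by auto
    moreover have "P y \<subseteq> P m" using Pmono yS mS y by auto
    ultimately have "S - P y = M" using M m unfolding \<A>_def by auto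
    then have "P y = P m" using m PS by blast
    moreover have "m \<in> P m" using mS refl unfolding P_def downc_def by auto
    ultimately have "le m y" unfolding P_def downc_def by auto
    then show "y = m" using antisym yS mS y by auto
  qed
  then show ?thesis using that m unfolding D_def downc_def by auto
qed

lemma dual: "compord T (\<lambda>x y. le y x)"
proof -
  have "{(x, y). x \<in> S \<and> y \<in> S \<and> le y x} = {p \<in> topspace (prod_topology T T). (\<lambda>(x,y). (y,x)) p \<in> {(x, y). x \<in> S \<and> y \<in> S \<and> le x y}}"
    by auto
  moreover have "closedin (prod_topology T T) {p \<in> topspace (prod_topology T T). (\<lambda>(x,y). (y,x)) p \<in> {(x, y). x \<in> S \<and> y \<in> S \<and> le x y}}"
    by (rule closedin_continuous_map_preimage[OF homeomorphic_imp_continuous_map[OF homeomorphic_map_swap] gcl])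
  ultimately have cl: "closedin (prod_topology T T) {(x, y). x \<in> S \<and> y \<in> S \<and> le y x}"
    by simp
  show ?thesis
    unfolding compord_def
  proof (intro conjI cpt hd cl ballI impI)
    show "le x x" if "x \<in> S" for x using refl that .
    show "le z x" if "x \<in> S" "y \<in> S" "z \<in> S" "le y x \<and> le z y" for x y z
      using trans[of z y x] that by blast
    show "x = y" if "x \<in> S" "y \<in> S" "le y x \<and> le x y" for x y
      using antisym[of x y] that by blast
  qed
qed

lemma exists_max:
  assumes L: "closedin T L" and x: "x \<in> L"
  obtains m where "m \<in> L" "le x m" "\<forall>y\<in>L. le m y \<longrightarrow> y = m"
proof -
  interpret d: co T "\<lambda>x y. le y x" using dual by (unfold_locales)
  show ?thesis using d.exists_min[OF L x] that by blast
qed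

lemma sub_compord:
  assumes C: "closedin T C" shows "compord (subtopology T C) le"
proof -
  have CS: "C \<subseteq> S" using closedin_subset[OF C] .
  have ts: "topspace (subtopology T C) = C" using CS by auto
  have "compact_space (subtopology T C)"
    by (rule compact_space_subtopology[OF closedin_compact_space[OF cpt C]])
  moreover have "Hausdorff_space (subtopology T C)" using hd Hausdorff_space_subtopology by blast
  moreover have "closedin (prod_topology (subtopology T C) (subtopology T C))
      {(x, y). x \<in> C \<and> y \<in> C \<and> le x y}"
  proof -
    have eq: "{(x, y). x \<in> C \<and> y \<in> C \<and> le x y} = {(x, y). x \<in> S \<and> y \<in> S \<and> le x y} \<inter> (C \<times> C)"
      using CS by auto
    show ?thesis unfolding subtopology_Times[symmetric] closedin_subtopology
      using eq gcl by blast
  qed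
  ultimately show ?thesis unfolding compord_def ts
  proof (intro conjI ballI impI; (elim conjE)?)
    show "le x x" if "x \<in> C" for x using refl that CS by blast
    show "le x z" if "x \<in> C" "y \<in> C" "z \<in> C" "le x y" "le y z" for x y z
      using trans[of x y z] that CS by blast
    show "x = y" if "x \<in> C" "y \<in> C" "le x y" "le y x" for x y
      using antisym[of x y] that CS by blast
  qed
qed

end


context co begin

abbreviation "VV \<equiv> vc_set T le"
definition "SB = {vc_diamond T le U | U. open_updown T le U} \<union> {vc_box T le U | U. open_updown T le U}"

lemma vc_top_eq: "vc_top T le = topology_generated_by SB"
  unfolding vc_top_def SB_def ..

lemma box_SB: "open_updown T le U \<Longrightarrow> vc_box T le U \<in> SB"
  unfolding SB_def by blast

lemma diamond_SB: "open_updown T le U \<Longrightarrow> vc_diamond T le U \<in> SB"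
  unfolding SB_def by blast

lemma SB_cases:
  assumes "A \<in> SB"
  obtains U where "open_updown T le U" "A = vc_diamond T le U"
    | U where "open_updown T le U" "A = vc_box T le U"
  using assms unfolding SB_def by blast

lemma vc_subS: "K \<in> VV \<Longrightarrow> K \<subseteq> S"
  unfolding vc_set_def using closedin_subset by auto

lemma vc_closed: "K \<in> VV \<Longrightarrow> closedin T K"
  unfolding vc_set_def by auto

lemma vc_sub_up: "K \<subseteq> S \<Longrightarrow> K \<subseteq> upc T le K"
  unfolding upc_def using refl by auto

lemma vc_sub_down: "K \<subseteq> S \<Longrightarrow> K \<subseteq> downc T le K"
  unfolding downc_def using refl by auto

lemma vc_updown: "K \<in> VV \<Longrightarrow> upc T le K \<inter> downc T le K = K"
proof
  assume K: "K \<in> VV"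
  show "upc T le K \<inter> downc T le K \<subseteq> K"
    using K unfolding vc_set_def convex_set_def upc_def downc_def by blast
  show "K \<subseteq> upc T le K \<inter> downc T le K"
    using vc_sub_up vc_sub_down vc_subS[OF K] by auto
qed

lemma SB_sub: "A \<in> SB \<Longrightarrow> A \<subseteq> VV"
  by (erule SB_cases) (auto simp: vc_diamond_def vc_box_def)

lemma open_updown_S: "open_updown T le S"
  unfolding open_updown_def is_upset_def upc_def by auto

lemma box_S: "vc_box T le S = VV"
  unfolding vc_box_def using vc_subS by auto

lemma UnSB: "\<Union>SB = VV"
proof
  show "\<Union>SB \<subseteq> VV" using SB_sub by blast
  have "VV \<in> SB" using box_SB[OF open_updown_S] box_S by simp
  then show "VV \<subseteq> \<Union>SB" by blast
qed

lemma topspace_vc: "topspace (vc_top T le) = VV"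
  unfolding vc_top_eq topology_generated_by_topspace UnSB ..

lemma openin_SB: "A \<in> SB \<Longrightarrow> openin (vc_top T le) A"
  unfolding vc_top_eq by (rule topology_generated_by_Basis)

lemma vc_le_refl: "vc_le T le K K"
  unfolding vc_le_def by auto

lemma vc_le_trans: "vc_le T le K L \<Longrightarrow> vc_le T le L M \<Longrightarrow> vc_le T le K M"
  unfolding vc_le_def by auto

lemma vc_le_antisym: "K \<in> VV \<Longrightarrow> L \<in> VV \<Longrightarrow> vc_le T le K L \<Longrightarrow> vc_le T le L K \<Longrightarrow> K = L"
  unfolding vc_le_def using vc_updown by (metis subset_antisym)

lemma sep:
  assumes K: "K \<in> VV" and L: "L \<in> VV" and nle: "\<not> vc_le T le K L"
  shows "\<exists>A B. A \<in> SB \<and> B \<in> SB \<and> K \<in> A \<and> L \<in> B \<and> (\<forall>K'\<in>A. \<forall>L'\<in>B. \<not> vc_le T le K' L')"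
proof (cases "upc T le L \<subseteq> upc T le K")
  case False
  then obtain x where x: "x \<in> upc T le L" "x \<notin> upc T le K" by blast
  have xS: "x \<in> S" using x unfolding upc_def by auto
  have KS: "K \<subseteq> S" using vc_subS[OF K] .
  have dis: "upc T le K \<inter> downc T le {x} = {}"
  proof (rule ccontr)
    assume "upc T le K \<inter> downc T le {x} \<noteq> {}"
    then obtain y k where "y \<in> S" "k \<in> K" "le k y" "le y x"
      unfolding upc_def downc_def by auto
    then have "le k x" using trans[of k y x] KS xS by auto
    then show False using x xS \<open>k \<in> K\<close> unfolding upc_def by auto
  qed
  obtain U W where U: "openin T U" "is_upset T le U" "upc T le K \<subseteq> U"
    and W: "openin T W" "is_downset T le W" "downc T le {x} \<subseteq> W" and UW: "U \<inter> W = {}"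
    using nachbin[OF upc_closed[OF vc_closed[OF K]] upc_upset[OF KS]
        downc_single_closed[OF xS] downc_downset dis] xS by blast
  have oU: "open_updown T le U" and oW: "open_updown T le W"
    using U W unfolding open_updown_def by auto
  have "K \<in> vc_box T le U"
    using K vc_sub_up[OF KS] U unfolding vc_box_def by auto
  moreover have "L \<in> vc_diamond T le W"
  proof -
    obtain l where l: "l \<in> L" "le l x" using x unfolding upc_def by auto
    then have "l \<in> downc T le {x}" using vc_subS[OF L] unfolding downc_def by auto
    then show ?thesis using l L W unfolding vc_diamond_def by auto
  qed
  moreover have "\<forall>K'\<in>vc_box T le U. \<forall>L'\<in>vc_diamond T le W. \<not> vc_le T le K' L'"
  proof (intro ballI notI)
    fix K' L' assume K': "K' \<in> vc_box T le U" and L': "L' \<in> vc_diamond T le W"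
      and le': "vc_le T le K' L'"
    obtain l where l: "l \<in> L'" "l \<in> W" using L' unfolding vc_diamond_def by auto
    have lS: "l \<in> S" using l W(2) unfolding is_downset_def by auto
    have "l \<in> upc T le L'" using l lS refl unfolding upc_def by auto
    then have "l \<in> upc T le K'" using le' unfolding vc_le_def by auto
    then obtain k where "k \<in> K'" "le k l" unfolding upc_def by auto
    then have "l \<in> upc T le U" using K' lS unfolding vc_box_def upc_def by auto
    then have "l \<in> U" using U(2) unfolding is_upset_def by auto
    then show False using l UW by auto
  qed
  ultimately show ?thesis using box_SB[OF oU] diamond_SB[OF oW] diamond_SB[OF oU] box_SB[OF oW] by blast
next
  case True
  then have "\<not> downc T le K \<subseteq> downc T le L" using nle unfolding vc_le_def by auto
  then obtain x where x: "x \<in> downc T le K" "x \<notin> downc T le L" by blast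
  have xS: "x \<in> S" using x unfolding downc_def by auto
  have LS: "L \<subseteq> S" using vc_subS[OF L] .
  have dis: "upc T le {x} \<inter> downc T le L = {}"
  proof (rule ccontr)
    assume "upc T le {x} \<inter> downc T le L \<noteq> {}"
    then obtain y l where "y \<in> S" "l \<in> L" "le x y" "le y l"
      unfolding upc_def downc_def by auto
    then have "le x l" using trans[of x y l] LS xS by auto
    then show False using x xS \<open>l \<in> L\<close> unfolding downc_def by auto
  qed
  obtain U W where U: "openin T U" "is_upset T le U" "upc T le {x} \<subseteq> U"
    and W: "openin T W" "is_downset T le W" "downc T le L \<subseteq> W" and UW: "U \<inter> W = {}"
    using nachbin[OF upc_single_closed[OF xS] upc_upset
        downc_closed[OF vc_closed[OF L]] downc_downset[OF LS] dis] xS by blast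
  have oU: "open_updown T le U" and oW: "open_updown T le W"
    using U W unfolding open_updown_def by auto
  have "L \<in> vc_box T le W"
    using L vc_sub_down[OF LS] W unfolding vc_box_def by auto
  moreover have "K \<in> vc_diamond T le U"
  proof -
    obtain k where k: "k \<in> K" "le x k" using x unfolding downc_def by auto
    then have "k \<in> upc T le {x}" using vc_subS[OF K] unfolding upc_def by auto
    then show ?thesis using k K U unfolding vc_diamond_def by auto
  qed
  moreover have "\<forall>K'\<in>vc_diamond T le U. \<forall>L'\<in>vc_box T le W. \<not> vc_le T le K' L'"
  proof (intro ballI notI)
    fix K' L' assume K': "K' \<in> vc_diamond T le U" and L': "L' \<in> vc_box T le W"
      and le': "vc_le T le K' L'"
    obtain k where k: "k \<in> K'" "k \<in> U" using K' unfolding vc_diamond_def by auto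
    have kS: "k \<in> S" using k U(2) unfolding is_upset_def by auto
    have "k \<in> downc T le K'" using k kS refl unfolding downc_def by auto
    then have "k \<in> downc T le L'" using le' unfolding vc_le_def by auto
    then obtain l where "l \<in> L'" "le k l" unfolding downc_def by auto
    then have "k \<in> downc T le W" using L' kS unfolding vc_box_def downc_def by auto
    then have "k \<in> W" using W(2) unfolding is_downset_def by auto
    then show False using k UW by auto
  qed
  ultimately show ?thesis using box_SB[OF oU] diamond_SB[OF oW] diamond_SB[OF oU] box_SB[OF oW] by blast
qed

end


context co begin

lemma vc_hausdorff: "Hausdorff_space (vc_top T le)"
  unfolding Hausdorff_space_def topspace_vc
proof (intro allI impI, elim conjE)
  fix K L assume K: "K \<in> VV" and L: "L \<in> VV" and ne: "K \<noteq> L"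
  have disj: "\<exists>A B. openin (vc_top T le) A \<and> openin (vc_top T le) B \<and> K \<in> A \<and> L \<in> B \<and> disjnt A B"
    if K: "K \<in> VV" and L: "L \<in> VV" and nle: "\<not> vc_le T le K L" for K L
  proof -
    obtain A B where AB: "A \<in> SB" "B \<in> SB" "K \<in> A" "L \<in> B" "\<forall>K'\<in>A. \<forall>L'\<in>B. \<not> vc_le T le K' L'"
      using sep[OF K L nle] by blast
    have "disjnt A B" unfolding disjnt_def using AB(5) vc_le_refl by blast
    then show ?thesis using AB openin_SB by blast
  qed
  show "\<exists>A B. openin (vc_top T le) A \<and> openin (vc_top T le) B \<and> K \<in> A \<and> L \<in> B \<and> disjnt A B"
  proof (cases "vc_le T le K L")
    case True
    then have "\<not> vc_le T le L K" using vc_le_antisym[OF K L] ne by auto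
    then obtain A B where "openin (vc_top T le) A" "openin (vc_top T le) B" "L \<in> A" "K \<in> B" "disjnt A B"
      using disj[OF L K] by blast
    then show ?thesis by (meson disjnt_sym)
  next
    case False then show ?thesis using disj[OF K L] by blast
  qed
qed

lemma vc_le_closed:
  "closedin (prod_topology (vc_top T le) (vc_top T le))
     {(K, L). K \<in> VV \<and> L \<in> VV \<and> vc_le T le K L}"
  unfolding closedin_def
proof
  show "{(K, L). K \<in> VV \<and> L \<in> VV \<and> vc_le T le K L} \<subseteq> topspace (prod_topology (vc_top T le) (vc_top T le))"
    by (auto simp: topspace_vc)
  show "openin (prod_topology (vc_top T le) (vc_top T le))
     (topspace (prod_topology (vc_top T le) (vc_top T le)) - {(K, L). K \<in> VV \<and> L \<in> VV \<and> vc_le T le K L})"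
  proof (subst openin_subopen, intro ballI)
    fix p assume p: "p \<in> topspace (prod_topology (vc_top T le) (vc_top T le)) - {(K, L). K \<in> VV \<and> L \<in> VV \<and> vc_le T le K L}"
    then obtain K L where KL: "p = (K, L)" "K \<in> VV" "L \<in> VV" "\<not> vc_le T le K L"
      by (auto simp: topspace_vc)
    obtain A B where AB: "A \<in> SB" "B \<in> SB" "K \<in> A" "L \<in> B" "\<forall>K'\<in>A. \<forall>L'\<in>B. \<not> vc_le T le K' L'"
      using sep[OF KL(2-4)] by blast
    have "openin (prod_topology (vc_top T le) (vc_top T le)) (A \<times> B)"
      using openin_SB AB by (simp add: openin_prod_Times_iff)
    moreover have "A \<times> B \<subseteq> topspace (prod_topology (vc_top T le) (vc_top T le)) - {(K, L). K \<in> VV \<and> L \<in> VV \<and> vc_le T le K L}"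
    proof -
      have "A \<subseteq> VV" "B \<subseteq> VV" using SB_sub AB by auto
      then show ?thesis using AB(5) by (auto simp: topspace_vc)
    qed
    ultimately show "\<exists>T'. openin (prod_topology (vc_top T le) (vc_top T le)) T' \<and> p \<in> T' \<and>
       T' \<subseteq> topspace (prod_topology (vc_top T le) (vc_top T le)) - {(K, L). K \<in> VV \<and> L \<in> VV \<and> vc_le T le K L}"
      using KL AB by blast
  qed
qed

lemma vc_top_subbase:
  "topology (arbitrary union_of (finite intersection_of (\<lambda>x. x \<in> SB) relative_to VV)) = vc_top T le"
  unfolding topology_eq
proof
  fix Z
  show "openin (topology (arbitrary union_of (finite intersection_of (\<lambda>x. x \<in> SB) relative_to VV))) Z
    \<longleftrightarrow> openin (vc_top T le) Z"
  proof
    assume "openin (topology (arbitrary union_of (finite intersection_of (\<lambda>x. x \<in> SB) relative_to VV))) Z"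
    then show "openin (vc_top T le) Z"
      by (rule minimal_topology_subbase[rotated 2])
        (auto simp: openin_SB topspace_vc[symmetric])
  next
    assume "openin (vc_top T le) Z"
    then have "generate_topology_on SB Z" unfolding vc_top_eq openin_topology_generated_by_iff .
    moreover have "(arbitrary union_of (finite intersection_of (\<lambda>x. x \<in> SB) relative_to VV)) A"
      if A: "A \<in> SB" for A
    proof -
      have "(finite intersection_of (\<lambda>x. x \<in> SB) relative_to VV) A"
        using A SB_sub by (intro relative_to_subset_inc finite_intersection_of_inc) auto
      then show "(arbitrary union_of (finite intersection_of (\<lambda>x. x \<in> SB) relative_to VV)) A"
        by (rule arbitrary_union_of_inc)
    qed
    ultimately have "(arbitrary union_of (finite intersection_of (\<lambda>x. x \<in> SB) relative_to VV)) Z"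
      using generate_topology_on_coarsest[OF istopology_subbase] by blast
    then show "openin (topology (arbitrary union_of (finite intersection_of (\<lambda>x. x \<in> SB) relative_to VV))) Z"
      by (simp add: openin_subbase)
  qed
qed

lemma vc_compact: "compact_space (vc_top T le)"
proof (rule Alexander_subbase_alt[OF _ _ vc_top_subbase])
  show "VV \<subseteq> \<Union>SB" using UnSB by simp
  fix C assume C: "C \<subseteq> SB" and cov: "VV \<subseteq> \<Union>C"
  define Dd where "Dd = {U. open_updown T le U \<and> vc_diamond T le U \<in> C}"
  define F where "F = S - \<Union>Dd"
  have Dd_open: "\<And>U. U \<in> Dd \<Longrightarrow> openin T U" unfolding Dd_def open_updown_def by auto
  have "openin T (\<Union>Dd)" using Dd_open by (rule openin_Union)
  then have "closedin T F" unfolding F_def by (rule closedin_diff[OF closedin_topspace])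
  moreover have "convex_set T le F"
    unfolding convex_set_def
  proof (intro ballI impI)
    fix y1 y2 x assume y: "y1 \<in> F" "y2 \<in> F" "x \<in> S" "le y1 x \<and> le x y2"
    show "x \<in> F"
    proof (rule ccontr)
      assume "x \<notin> F"
      then obtain U where U: "U \<in> Dd" "x \<in> U" using y(3) unfolding F_def by auto
      then have "is_upset T le U \<or> is_downset T le U" unfolding Dd_def open_updown_def by auto
      then show False
      proof
        assume "is_upset T le U"
        then have "y2 \<in> U" using U y unfolding is_upset_def upc_def F_def by auto
        then show False using y U unfolding F_def by auto
      next
        assume "is_downset T le U"
        then have "y1 \<in> U" using U y unfolding is_downset_def downc_def F_def by auto
        then show False using y U unfolding F_def by auto
      qed
    qed
  qed
  ultimately have FV: "F \<in> VV" unfolding vc_set_def by auto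
  then obtain c where c: "c \<in> C" "F \<in> c" using cov by auto
  have "c \<in> SB" using c C by auto
  then obtain U0 where U0: "open_updown T le U0" "c = vc_box T le U0 \<or> c = vc_diamond T le U0"
    by (rule SB_cases) auto
  have "c \<noteq> vc_diamond T le U0"
  proof
    assume "c = vc_diamond T le U0"
    then have "U0 \<in> Dd" using c U0 unfolding Dd_def by auto
    then show False using c \<open>c = vc_diamond T le U0\<close> unfolding vc_diamond_def F_def by auto
  qed
  then have cb: "c = vc_box T le U0" using U0 by auto
  then have "F \<subseteq> U0" using c unfolding vc_box_def by auto
  then have cov2: "S - U0 \<subseteq> \<Union>Dd" unfolding F_def by auto
  have "compactin T (S - U0)"
    using U0 unfolding open_updown_def
    by (intro closedin_compact_space cpt) auto
  then have "\<exists>F. finite F \<and> F \<subseteq> Dd \<and> S - U0 \<subseteq> \<Union>F"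
    unfolding compactin_def using Dd_open cov2 by blast
  then obtain Fd where Fd: "finite Fd" "Fd \<subseteq> Dd" "S - U0 \<subseteq> \<Union>Fd"
    by blast
  define C' where "C' = insert c (vc_diamond T le ` Fd)"
  have "finite C'" unfolding C'_def using Fd by auto
  moreover have "C' \<subseteq> C" unfolding C'_def using c Fd unfolding Dd_def by blast
  moreover have "VV \<subseteq> \<Union>C'"
  proof
    fix K assume K: "K \<in> VV"
    show "K \<in> \<Union>C'"
    proof (cases "K \<subseteq> U0")
      case True then show ?thesis using K cb unfolding C'_def vc_box_def by auto
    next
      case False
      then obtain x where "x \<in> K" "x \<notin> U0" by auto
      moreover have "x \<in> S" using vc_subS[OF K] \<open>x \<in> K\<close> by auto
      ultimately obtain U where "U \<in> Fd" "x \<in> U" using Fd by auto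
      then have "K \<in> vc_diamond T le U" using K \<open>x \<in> K\<close> unfolding vc_diamond_def by auto
      then show ?thesis using \<open>U \<in> Fd\<close> unfolding C'_def by auto
    qed
  qed
  ultimately show "\<exists>C'. finite C' \<and> C' \<subseteq> C \<and> VV \<subseteq> \<Union>C'" by blast
qed

lemma vc_compord: "compord (vc_top T le) (vc_le T le)"
  unfolding compord_def topspace_vc
proof (intro conjI ballI impI vc_compact vc_hausdorff vc_le_refl vc_le_closed)
  show "vc_le T le x z" if "vc_le T le x y \<and> vc_le T le y z" for x y z
    using that vc_le_trans by blast
  show "x = y" if "x \<in> VV" "y \<in> VV" "vc_le T le x y \<and> vc_le T le y x" for x y
    using that vc_le_antisym by blast
qed

end


context co begin

lemma updownc_sub: "A \<subseteq> S \<Longrightarrow> A \<subseteq> updownc T le A"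
  unfolding updownc_def using vc_sub_up vc_sub_down by auto

lemma upc_updownc: assumes "A \<subseteq> S" shows "upc T le (updownc T le A) = upc T le A"
proof
  show "upc T le A \<subseteq> upc T le (updownc T le A)"
    using updownc_sub[OF assms] unfolding upc_def by blast
  show "upc T le (updownc T le A) \<subseteq> upc T le A"
  proof
    fix y assume "y \<in> upc T le (updownc T le A)"
    then obtain z a where "y \<in> S" "z \<in> S" "a \<in> A" "le a z" "le z y"
      unfolding upc_def updownc_def by auto
    then show "y \<in> upc T le A" using trans[of a z y] assms unfolding upc_def by auto
  qed
qed

lemma downc_updownc: assumes "A \<subseteq> S" shows "downc T le (updownc T le A) = downc T le A"
proof
  show "downc T le A \<subseteq> downc T le (updownc T le A)"
    using updownc_sub[OF assms] unfolding downc_def by blast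
  show "downc T le (updownc T le A) \<subseteq> downc T le A"
  proof
    fix y assume "y \<in> downc T le (updownc T le A)"
    then obtain z a where "y \<in> S" "z \<in> S" "a \<in> A" "le z a" "le y z"
      unfolding downc_def updownc_def by auto
    then show "y \<in> downc T le A" using trans[of y z a] assms unfolding downc_def by auto
  qed
qed

lemma updownc_vc: assumes "closedin T A" shows "updownc T le A \<in> VV"
proof -
  have AS: "A \<subseteq> S" using closedin_subset[OF assms] .
  have "closedin T (updownc T le A)"
    unfolding updownc_def using upc_closed[OF assms] downc_closed[OF assms] by auto
  moreover have "convex_set T le (updownc T le A)"
    unfolding convex_set_def
  proof (intro ballI impI)
    fix y1 y2 x assume y: "y1 \<in> updownc T le A" "y2 \<in> updownc T le A" "x \<in> S" "le y1 x \<and> le x y2"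
    obtain a1 where a1: "a1 \<in> A" "le a1 y1" "y1 \<in> S" using y unfolding updownc_def upc_def by auto
    obtain a2 where a2: "a2 \<in> A" "le y2 a2" "y2 \<in> S" using y unfolding updownc_def downc_def by auto
    have "le a1 x" using trans[of a1 y1 x] a1 y AS by auto
    moreover have "le x a2" using trans[of x y2 a2] a2 y AS by auto
    ultimately show "x \<in> updownc T le A" using a1 a2 y(3) unfolding updownc_def upc_def downc_def by auto
  qed
  ultimately show ?thesis unfolding vc_set_def by auto
qed

end

locale co2 = X: co TX leX + Y: co TY leY
  for TX :: "'a topology" and leX and TY :: "'b topology" and leY +
  fixes f :: "'a \<Rightarrow> 'b"
  assumes mor: "compord_mor TX leX TY leY f"
begin

lemma fcont: "continuous_map TX TY f" using mor unfolding compord_mor_def by auto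
lemma fS: "x \<in> X.S \<Longrightarrow> f x \<in> Y.S" using continuous_map_image_subset_topspace[OF fcont] by blast
lemma fmono: "x \<in> X.S \<Longrightarrow> y \<in> X.S \<Longrightarrow> leX x y \<Longrightarrow> leY (f x) (f y)"
  using mor unfolding compord_mor_def by auto

lemma img_closed: "closedin TX K \<Longrightarrow> closedin TY (f ` K)"
  using image_compactin[OF closedin_compact_space[OF X.cpt] fcont] compactin_imp_closedin[OF Y.hd]
  by blast

lemma img_sub: "K \<subseteq> X.S \<Longrightarrow> f ` K \<subseteq> Y.S" using fS by auto

lemma vcf_vc: "K \<in> X.VV \<Longrightarrow> vc_map TY leY f K \<in> Y.VV"
  unfolding vc_map_def by (intro Y.updownc_vc img_closed X.vc_closed)

lemma upc_img: assumes "K \<subseteq> X.S"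
  shows "upc TY leY (f ` updownc TX leX K) = upc TY leY (f ` K)"
proof
  show "upc TY leY (f ` K) \<subseteq> upc TY leY (f ` updownc TX leX K)"
    using X.updownc_sub[OF assms] unfolding upc_def by blast
  show "upc TY leY (f ` updownc TX leX K) \<subseteq> upc TY leY (f ` K)"
  proof
    fix y assume "y \<in> upc TY leY (f ` updownc TX leX K)"
    then obtain z k where "y \<in> Y.S" "z \<in> X.S" "k \<in> K" "leX k z" "leY (f z) y"
      unfolding upc_def updownc_def by auto
    moreover then have "leY (f k) (f z)" using fmono assms by auto
    ultimately have "leY (f k) y" using Y.trans[of "f k" "f z" y] fS assms by auto
    then show "y \<in> upc TY leY (f ` K)" using \<open>y \<in> Y.S\<close> \<open>k \<in> K\<close> unfolding upc_def by auto
  qed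
qed

lemma downc_img: assumes "K \<subseteq> X.S"
  shows "downc TY leY (f ` updownc TX leX K) = downc TY leY (f ` K)"
proof
  show "downc TY leY (f ` K) \<subseteq> downc TY leY (f ` updownc TX leX K)"
    using X.updownc_sub[OF assms] unfolding downc_def by blast
  show "downc TY leY (f ` updownc TX leX K) \<subseteq> downc TY leY (f ` K)"
  proof
    fix y assume "y \<in> downc TY leY (f ` updownc TX leX K)"
    then obtain z k where "y \<in> Y.S" "z \<in> X.S" "k \<in> K" "leX z k" "leY y (f z)"
      unfolding downc_def updownc_def by auto
    moreover then have "leY (f z) (f k)" using fmono assms by auto
    ultimately have "leY y (f k)" using Y.trans[of y "f z" "f k"] fS assms by auto
    then show "y \<in> downc TY leY (f ` K)" using \<open>y \<in> Y.S\<close> \<open>k \<in> K\<close> unfolding downc_def by auto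
  qed
qed

lemma updownc_img: "K \<subseteq> X.S \<Longrightarrow>
  updownc TY leY (f ` updownc TX leX K) = updownc TY leY (f ` K)"
  unfolding updownc_def[of TY] using upc_img downc_img by auto

lemma pre_oud: assumes U: "open_updown TY leY U"
  shows "open_updown TX leX {x \<in> X.S. f x \<in> U}"
proof -
  have o: "openin TX {x \<in> X.S. f x \<in> U}"
    using U unfolding open_updown_def by (intro openin_continuous_map_preimage[OF fcont]) auto
  have "is_upset TY leY U \<or> is_downset TY leY U" using U unfolding open_updown_def by auto
  then have "is_upset TX leX {x \<in> X.S. f x \<in> U} \<or> is_downset TX leX {x \<in> X.S. f x \<in> U}"
  proof
    assume up: "is_upset TY leY U"
    have "upc TX leX {x \<in> X.S. f x \<in> U} \<subseteq> {x \<in> X.S. f x \<in> U}"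
    proof
      fix y assume "y \<in> upc TX leX {x \<in> X.S. f x \<in> U}"
      then obtain x where x: "y \<in> X.S" "x \<in> X.S" "f x \<in> U" "leX x y" unfolding upc_def by auto
      then have "leY (f x) (f y)" using fmono by auto
      then have "f y \<in> upc TY leY U" using fS x unfolding upc_def by auto
      then show "y \<in> {x \<in> X.S. f x \<in> U}" using up x unfolding is_upset_def by auto
    qed
    then show ?thesis unfolding is_upset_def by auto
  next
    assume dn: "is_downset TY leY U"
    have "downc TX leX {x \<in> X.S. f x \<in> U} \<subseteq> {x \<in> X.S. f x \<in> U}"
    proof
      fix y assume "y \<in> downc TX leX {x \<in> X.S. f x \<in> U}"
      then obtain x where x: "y \<in> X.S" "x \<in> X.S" "f x \<in> U" "leX y x" unfolding downc_def by auto
      then have "leY (f y) (f x)" using fmono by auto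
      then have "f y \<in> downc TY leY U" using fS x unfolding downc_def by auto
      then show "y \<in> {x \<in> X.S. f x \<in> U}" using dn x unfolding is_downset_def by auto
    qed
    then show ?thesis unfolding is_downset_def by auto
  qed
  then show ?thesis using o unfolding open_updown_def by auto
qed

lemma pre_diamond: assumes U: "open_updown TY leY U"
  shows "{K. vc_map TY leY f K \<in> vc_diamond TY leY U} \<inter> X.VV = vc_diamond TX leX {x \<in> X.S. f x \<in> U}"
proof -
  have "vc_map TY leY f K \<inter> U \<noteq> {} \<longleftrightarrow> f ` K \<inter> U \<noteq> {}" if K: "K \<in> X.VV" for K
  proof
    have KS: "K \<subseteq> X.S" using X.vc_subS[OF K] .
    show "f ` K \<inter> U \<noteq> {} \<Longrightarrow> vc_map TY leY f K \<inter> U \<noteq> {}"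
      using Y.updownc_sub[OF img_sub[OF KS]] unfolding vc_map_def by blast
    assume "vc_map TY leY f K \<inter> U \<noteq> {}"
    then obtain y where y: "y \<in> updownc TY leY (f ` K)" "y \<in> U" unfolding vc_map_def by auto
    have "is_upset TY leY U \<or> is_downset TY leY U" using U unfolding open_updown_def by auto
    then show "f ` K \<inter> U \<noteq> {}"
    proof
      assume up: "is_upset TY leY U"
      obtain k where k: "k \<in> K" "leY y (f k)" using y unfolding updownc_def downc_def by auto
      then have "f k \<in> upc TY leY U" using y fS KS unfolding upc_def by auto
      then show ?thesis using up k unfolding is_upset_def by auto
    next
      assume dn: "is_downset TY leY U"
      obtain k where k: "k \<in> K" "leY (f k) y" using y unfolding updownc_def upc_def by auto
      then have "f k \<in> downc TY leY U" using y fS KS unfolding downc_def by auto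
      then show ?thesis using dn k unfolding is_downset_def by auto
    qed
  qed
  moreover have "f ` K \<inter> U \<noteq> {} \<longleftrightarrow> K \<inter> {x \<in> X.S. f x \<in> U} \<noteq> {}" if K: "K \<in> X.VV" for K
    using X.vc_subS[OF K] by auto
  ultimately have "vc_map TY leY f K \<inter> U \<noteq> {} \<longleftrightarrow> K \<inter> {x \<in> X.S. f x \<in> U} \<noteq> {}" if "K \<in> X.VV" for K
    using that by blast
  then show ?thesis using vcf_vc unfolding vc_diamond_def by auto
qed

lemma pre_box: assumes U: "open_updown TY leY U"
  shows "{K. vc_map TY leY f K \<in> vc_box TY leY U} \<inter> X.VV = vc_box TX leX {x \<in> X.S. f x \<in> U}"
proof -
  have "vc_map TY leY f K \<subseteq> U \<longleftrightarrow> f ` K \<subseteq> U" if K: "K \<in> X.VV" for K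
  proof
    have KS: "K \<subseteq> X.S" using X.vc_subS[OF K] .
    show "vc_map TY leY f K \<subseteq> U \<Longrightarrow> f ` K \<subseteq> U"
      using Y.updownc_sub[OF img_sub[OF KS]] unfolding vc_map_def by blast
    assume sub: "f ` K \<subseteq> U"
    have "is_upset TY leY U \<or> is_downset TY leY U" using U unfolding open_updown_def by auto
    then show "vc_map TY leY f K \<subseteq> U"
    proof
      assume up: "is_upset TY leY U"
      show ?thesis
      proof
        fix y assume "y \<in> vc_map TY leY f K"
        then obtain k where k: "k \<in> K" "leY (f k) y" "y \<in> Y.S" unfolding vc_map_def updownc_def upc_def by auto
        then have "y \<in> upc TY leY U" using sub unfolding upc_def by auto
        then show "y \<in> U" using up unfolding is_upset_def by auto
      qed
    next
      assume dn: "is_downset TY leY U"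
      show ?thesis
      proof
        fix y assume "y \<in> vc_map TY leY f K"
        then obtain k where k: "k \<in> K" "leY y (f k)" "y \<in> Y.S" unfolding vc_map_def updownc_def downc_def by auto
        then have "y \<in> downc TY leY U" using sub unfolding downc_def by auto
        then show "y \<in> U" using dn unfolding is_downset_def by auto
      qed
    qed
  qed
  moreover have "f ` K \<subseteq> U \<longleftrightarrow> K \<subseteq> {x \<in> X.S. f x \<in> U}" if K: "K \<in> X.VV" for K
    using X.vc_subS[OF K] by auto
  ultimately show ?thesis using vcf_vc unfolding vc_box_def by auto
qed

lemma vcf_cont: "continuous_map (vc_top TX leX) (vc_top TY leY) (vc_map TY leY f)"
  unfolding Y.vc_top_eq continuous_on_generated_topo_iff
proof (intro conjI allI impI)
  show "vc_map TY leY f ` topspace (vc_top TX leX) \<subseteq> \<Union> Y.SB"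
    using vcf_vc unfolding X.topspace_vc Y.UnSB by auto
  fix A assume A: "A \<in> Y.SB"
  have eq: "vc_map TY leY f -` A \<inter> topspace (vc_top TX leX) = {K. vc_map TY leY f K \<in> A} \<inter> X.VV"
    unfolding X.topspace_vc by auto
  from A show "openin (vc_top TX leX) (vc_map TY leY f -` A \<inter> topspace (vc_top TX leX))"
  proof (cases rule: Y.SB_cases)
    case (1 U)
    show ?thesis unfolding eq unfolding 1(2) pre_diamond[OF 1(1)]
      by (intro X.openin_SB X.diamond_SB pre_oud 1(1))
  next
    case (2 U)
    show ?thesis unfolding eq unfolding 2(2) pre_box[OF 2(1)]
      by (intro X.openin_SB X.box_SB pre_oud 2(1))
  qed
qed

lemma vcf_mono:
  assumes K: "K \<in> X.VV" and L: "L \<in> X.VV" and le: "vc_le TX leX K L"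
  shows "vc_le TY leY (vc_map TY leY f K) (vc_map TY leY f L)"
proof -
  have KS: "K \<subseteq> X.S" and LS: "L \<subseteq> X.S" using X.vc_subS K L by auto
  have "upc TY leY (f ` L) \<subseteq> upc TY leY (f ` K)"
  proof
    fix y assume "y \<in> upc TY leY (f ` L)"
    then obtain l where l: "l \<in> L" "leY (f l) y" "y \<in> Y.S" unfolding upc_def by auto
    have "l \<in> upc TX leX L" using l LS X.refl unfolding upc_def by auto
    then have "l \<in> upc TX leX K" using le unfolding vc_le_def by auto
    then obtain k where k: "k \<in> K" "leX k l" unfolding upc_def by auto
    then have "leY (f k) (f l)" using fmono KS LS l by auto
    then have "leY (f k) y" using Y.trans[of "f k" "f l" y] l k fS KS LS by auto
    then show "y \<in> upc TY leY (f ` K)" using k l unfolding upc_def by auto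
  qed
  moreover have "downc TY leY (f ` K) \<subseteq> downc TY leY (f ` L)"
  proof
    fix y assume "y \<in> downc TY leY (f ` K)"
    then obtain k where k: "k \<in> K" "leY y (f k)" "y \<in> Y.S" unfolding downc_def by auto
    have "k \<in> downc TX leX K" using k KS X.refl unfolding downc_def by auto
    then have "k \<in> downc TX leX L" using le unfolding vc_le_def by auto
    then obtain l where l: "l \<in> L" "leX k l" unfolding downc_def by auto
    then have "leY (f k) (f l)" using fmono KS LS k by auto
    then have "leY y (f l)" using Y.trans[of y "f k" "f l"] l k fS KS LS by auto
    then show "y \<in> downc TY leY (f ` L)" using k l unfolding downc_def by auto
  qed
  ultimately show ?thesis
    unfolding vc_le_def vc_map_def
    using Y.upc_updownc[OF img_sub[OF KS]] Y.upc_updownc[OF img_sub[OF LS]]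
      Y.downc_updownc[OF img_sub[OF KS]] Y.downc_updownc[OF img_sub[OF LS]] by simp
qed

lemma vcf_mor: "compord_mor (vc_top TX leX) (vc_le TX leX) (vc_top TY leY) (vc_le TY leY) (vc_map TY leY f)"
  unfolding compord_mor_def X.topspace_vc using vcf_cont vcf_mono by blast

end


locale eqs =
  fixes TE :: "'e topology" and leE :: "'e \<Rightarrow> 'e \<Rightarrow> bool"
    and TX :: "'x topology" and leX :: "'x \<Rightarrow> 'x \<Rightarrow> bool"
    and TY :: "'y topology" and leY :: "'y \<Rightarrow> 'y \<Rightarrow> bool"
    and f g :: "'x \<Rightarrow> 'y" and k :: "'y \<Rightarrow> 'x" and h :: "'e \<Rightarrow> 'x"
  assumes cX: "compord TX leX" and cY: "compord TY leY" and cE: "compord TE leE"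
    and mf: "compord_mor TX leX TY leY f" and mg: "compord_mor TX leX TY leY g"
    and mk: "compord_mor TY leY TX leX k"
    and kf: "\<forall>x\<in>topspace TX. k (f x) = x" and kg: "\<forall>x\<in>topspace TX. k (g x) = x"
    and EQ: "is_equalizer_wrt TYPE('x) TE leE TX leX TY leY h f g"
begin

lemma mh: "compord_mor TE leE TX leX h" using EQ unfolding is_equalizer_wrt_def by blast
lemma hfg: "e \<in> topspace TE \<Longrightarrow> f (h e) = g (h e)" using EQ unfolding is_equalizer_wrt_def by blast

sublocale X: co TX leX using cX by unfold_locales
sublocale Y: co TY leY using cY by unfold_locales
sublocale E: co TE leE using cE by unfold_locales
sublocale F: co2 TX leX TY leY f using mf by unfold_locales
sublocale G: co2 TX leX TY leY g using mg by unfold_locales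
sublocale H: co2 TE leE TX leX h using mh by unfold_locales
sublocale K: co2 TY leY TX leX k using mk by unfold_locales

lemma univ:
  fixes C :: "'x set"
  assumes C: "closedin TX C" and Cfg: "\<forall>x\<in>C. f x = g x"
  obtains u where "compord_mor (subtopology TX C) leX TE leE u" "\<forall>w\<in>C. h (u w) = w"
    "\<And>u'. compord_mor (subtopology TX C) leX TE leE u' \<Longrightarrow> (\<forall>w\<in>C. h (u' w) = w) \<Longrightarrow> (\<forall>w\<in>C. u' w = u w)"
proof -
  have CS: "C \<subseteq> X.S" using closedin_subset[OF C] .
  have ts: "topspace (subtopology TX C) = C" using CS by auto
  have U: "\<forall>(TZ :: 'x topology) leZ z.
        compord TZ leZ \<and> compord_mor TZ leZ TX leX z \<and> (\<forall>w\<in>topspace TZ. f (z w) = g (z w)) \<longrightarrow>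
        (\<exists>u. compord_mor TZ leZ TE leE u \<and> (\<forall>w\<in>topspace TZ. h (u w) = z w) \<and>
             (\<forall>u'. compord_mor TZ leZ TE leE u' \<and> (\<forall>w\<in>topspace TZ. h (u' w) = z w) \<longrightarrow>
                   (\<forall>w\<in>topspace TZ. u' w = u w)))"
    using EQ unfolding is_equalizer_wrt_def by blast
  have "compord (subtopology TX C) leX" using X.sub_compord[OF C] .
  moreover have "compord_mor (subtopology TX C) leX TX leX (\<lambda>x. x)"
    unfolding compord_mor_def
    using continuous_map_from_subtopology[OF continuous_map_id[unfolded id_def]] by auto
  moreover have "\<forall>w\<in>topspace (subtopology TX C). f w = g w" using Cfg ts by auto
  ultimately obtain u where "compord_mor (subtopology TX C) leX TE leE u"
     "\<forall>w\<in>topspace (subtopology TX C). h (u w) = w"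
     "\<forall>u'. compord_mor (subtopology TX C) leX TE leE u' \<and> (\<forall>w\<in>topspace (subtopology TX C). h (u' w) = w) \<longrightarrow>
                   (\<forall>w\<in>topspace (subtopology TX C). u' w = u w)"
    using U[rule_format, of "subtopology TX C" leX "\<lambda>x. x"] by blast
  then show ?thesis using that unfolding ts by blast
qed

lemma h_inj: assumes "e1 \<in> E.S" "e2 \<in> E.S" "h e1 = h e2" shows "e1 = e2"
proof -
  let ?a = "h e1"
  have aS: "?a \<in> X.S" using H.fS assms by auto
  have C: "closedin TX {?a}" by (rule closedin_t1_singleton[OF Hausdorff_imp_t1_space[OF X.hd] aS])
  have Cfg: "\<forall>x\<in>{?a}. f x = g x" using hfg assms by auto
  obtain u where u: "compord_mor (subtopology TX {?a}) leX TE leE u" "\<forall>w\<in>{?a}. h (u w) = w"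
    "\<And>u'. compord_mor (subtopology TX {?a}) leX TE leE u' \<Longrightarrow> (\<forall>w\<in>{?a}. h (u' w) = w) \<Longrightarrow> (\<forall>w\<in>{?a}. u' w = u w)"
    by (rule univ[OF C Cfg]) blast
  have m: "compord_mor (subtopology TX {?a}) leX TE leE (\<lambda>_. e)" if "e \<in> E.S" for e
    unfolding compord_mor_def using that E.refl by auto
  have "e1 = u ?a" using u(3)[OF m[OF assms(1)]] by auto
  moreover have "e2 = u ?a" using u(3)[OF m[OF assms(2)]] assms(3) by auto
  ultimately show ?thesis by simp
qed

definition "Eq = {x \<in> X.S. f x = g x}"

lemma Eq_closed: "closedin TX Eq"
  unfolding Eq_def by (rule closedin_continuous_maps_eq[OF Y.hd F.fcont G.fcont])

lemma Eq_props: "(\<forall>x\<in>Eq. \<exists>e\<in>E.S. h e = x) \<and>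
   (\<forall>e1\<in>E.S. \<forall>e2\<in>E.S. leX (h e1) (h e2) \<longrightarrow> leE e1 e2)"
proof -
  have Cfg: "\<forall>x\<in>Eq. f x = g x" unfolding Eq_def by auto
  obtain u where u: "compord_mor (subtopology TX Eq) leX TE leE u" "\<forall>w\<in>Eq. h (u w) = w"
    "\<And>u'. compord_mor (subtopology TX Eq) leX TE leE u' \<Longrightarrow> (\<forall>w\<in>Eq. h (u' w) = w) \<Longrightarrow> (\<forall>w\<in>Eq. u' w = u w)"
    by (rule univ[OF Eq_closed Cfg]) blast
  have ES: "Eq \<subseteq> X.S" unfolding Eq_def by auto
  have uS: "u x \<in> E.S" if "x \<in> Eq" for x
    using u(1) that ES unfolding compord_mor_def continuous_map_def by auto
  have uh: "u (h e) = e" if "e \<in> E.S" for e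
  proof -
    have "h e \<in> Eq" unfolding Eq_def using that hfg H.fS by auto
    then show ?thesis using h_inj[OF uS that] u(2) by auto
  qed
  have "\<forall>x\<in>Eq. \<exists>e\<in>E.S. h e = x" using uS u(2) by blast
  moreover have "\<forall>e1\<in>E.S. \<forall>e2\<in>E.S. leX (h e1) (h e2) \<longrightarrow> leE e1 e2"
  proof (intro ballI impI)
    fix e1 e2 assume e: "e1 \<in> E.S" "e2 \<in> E.S" "leX (h e1) (h e2)"
    have "h e1 \<in> Eq" "h e2 \<in> Eq" unfolding Eq_def using e hfg H.fS by auto
    then have "leE (u (h e1)) (u (h e2))"
      using u(1) e ES unfolding compord_mor_def by auto
    then show "leE e1 e2" using uh e by simp
  qed
  ultimately show ?thesis by blast
qed

lemma h_onto: "x \<in> X.S \<Longrightarrow> f x = g x \<Longrightarrow> \<exists>e\<in>E.S. h e = x"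
  using Eq_props unfolding Eq_def by blast

lemma h_refl: "e1 \<in> E.S \<Longrightarrow> e2 \<in> E.S \<Longrightarrow> leX (h e1) (h e2) \<Longrightarrow> leE e1 e2"
  using Eq_props by blast

end


context eqs begin

abbreviation "vch \<equiv> vc_map TX leX h"
abbreviation "vcf \<equiv> vc_map TY leY f"
abbreviation "vcg \<equiv> vc_map TY leY g"

lemma vch_refl:
  assumes K1: "K1 \<in> E.VV" and K2: "K2 \<in> E.VV" and le: "vc_le TX leX (vch K1) (vch K2)"
  shows "vc_le TE leE K1 K2"
proof -
  have S1: "K1 \<subseteq> E.S" and S2: "K2 \<subseteq> E.S" using E.vc_subS K1 K2 by auto
  have u1: "upc TX leX (vch K1) = upc TX leX (h ` K1)" and u2: "upc TX leX (vch K2) = upc TX leX (h ` K2)"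
    and d1: "downc TX leX (vch K1) = downc TX leX (h ` K1)" and d2: "downc TX leX (vch K2) = downc TX leX (h ` K2)"
    unfolding vc_map_def
    using X.upc_updownc[OF H.img_sub[OF S1]] X.upc_updownc[OF H.img_sub[OF S2]]
      X.downc_updownc[OF H.img_sub[OF S1]] X.downc_updownc[OF H.img_sub[OF S2]] by auto
  have "upc TE leE K2 \<subseteq> upc TE leE K1"
  proof
    fix e assume "e \<in> upc TE leE K2"
    then obtain k2 where k2: "e \<in> E.S" "k2 \<in> K2" "leE k2 e" unfolding upc_def by auto
    then have "leX (h k2) (h e)" using H.fmono S2 by auto
    then have "h e \<in> upc TX leX (h ` K2)" using H.fS k2 unfolding upc_def by auto
    then have "h e \<in> upc TX leX (h ` K1)" using le u1 u2 unfolding vc_le_def by auto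
    then obtain k1 where k1: "k1 \<in> K1" "leX (h k1) (h e)" unfolding upc_def by auto
    then have "leE k1 e" using h_refl S1 k2 by auto
    then show "e \<in> upc TE leE K1" using k1 k2 unfolding upc_def by auto
  qed
  moreover have "downc TE leE K1 \<subseteq> downc TE leE K2"
  proof
    fix e assume "e \<in> downc TE leE K1"
    then obtain k1 where k1: "e \<in> E.S" "k1 \<in> K1" "leE e k1" unfolding downc_def by auto
    then have "leX (h e) (h k1)" using H.fmono S1 by auto
    then have "h e \<in> downc TX leX (h ` K1)" using H.fS k1 unfolding downc_def by auto
    then have "h e \<in> downc TX leX (h ` K2)" using le d1 d2 unfolding vc_le_def by auto
    then obtain k2 where k2: "k2 \<in> K2" "leX (h e) (h k2)" unfolding downc_def by auto
    then have "leE e k2" using h_refl S2 k1 by auto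
    then show "e \<in> downc TE leE K2" using k1 k2 unfolding downc_def by auto
  qed
  ultimately show ?thesis unfolding vc_le_def by auto
qed

lemma vch_inj: "K1 \<in> E.VV \<Longrightarrow> K2 \<in> E.VV \<Longrightarrow> vch K1 = vch K2 \<Longrightarrow> K1 = K2"
  using vch_refl E.vc_le_antisym X.vc_le_refl by metis

lemma min_eq:
  assumes L: "L \<in> X.VV" and eq: "vcf L = vcg L" and m: "m \<in> L"
    and mmin: "\<forall>l\<in>L. leX l m \<longrightarrow> l = m"
  shows "f m = g m"
proof -
  have LS: "L \<subseteq> X.S" using X.vc_subS[OF L] .
  have mS: "m \<in> X.S" using m LS by auto
  have "f m \<in> vcf L" using Y.updownc_sub[OF F.img_sub[OF LS]] m unfolding vc_map_def by auto
  then have "f m \<in> upc TY leY (g ` L)" using eq unfolding vc_map_def updownc_def by auto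
  then obtain l where l: "l \<in> L" "leY (g l) (f m)" unfolding upc_def by auto
  then have "leX (k (g l)) (k (f m))" using K.fmono G.fS F.fS LS mS by auto
  then have "leX l m" using kf kg l LS mS by auto
  then have gf: "leY (g m) (f m)" using mmin l by auto
  have "g m \<in> vcg L" using Y.updownc_sub[OF G.img_sub[OF LS]] m unfolding vc_map_def by auto
  then have "g m \<in> upc TY leY (f ` L)" using eq unfolding vc_map_def updownc_def by auto
  then obtain l' where l': "l' \<in> L" "leY (f l') (g m)" unfolding upc_def by auto
  then have "leX (k (f l')) (k (g m))" using K.fmono G.fS F.fS LS mS by auto
  then have "leX l' m" using kf kg l' LS mS by auto
  then have fg: "leY (f m) (g m)" using mmin l' by auto
  show ?thesis using Y.antisym[OF F.fS[OF mS] G.fS[OF mS] fg gf] .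
qed

lemma max_eq:
  assumes L: "L \<in> X.VV" and eq: "vcf L = vcg L" and m: "m \<in> L"
    and mmax: "\<forall>l\<in>L. leX m l \<longrightarrow> l = m"
  shows "f m = g m"
proof -
  have LS: "L \<subseteq> X.S" using X.vc_subS[OF L] .
  have mS: "m \<in> X.S" using m LS by auto
  have "f m \<in> vcf L" using Y.updownc_sub[OF F.img_sub[OF LS]] m unfolding vc_map_def by auto
  then have "f m \<in> downc TY leY (g ` L)" using eq unfolding vc_map_def updownc_def by auto
  then obtain l where l: "l \<in> L" "leY (f m) (g l)" unfolding downc_def by auto
  then have "leX (k (f m)) (k (g l))" using K.fmono G.fS F.fS LS mS by auto
  then have "leX m l" using kf kg l LS mS by auto
  then have fg: "leY (f m) (g m)" using mmax l by auto
  have "g m \<in> vcg L" using Y.updownc_sub[OF G.img_sub[OF LS]] m unfolding vc_map_def by auto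
  then have "g m \<in> downc TY leY (f ` L)" using eq unfolding vc_map_def updownc_def by auto
  then obtain l' where l': "l' \<in> L" "leY (g m) (f l')" unfolding downc_def by auto
  then have "leX (k (g m)) (k (f l'))" using K.fmono G.fS F.fS LS mS by auto
  then have "leX m l'" using kf kg l' LS mS by auto
  then have gf: "leY (g m) (f m)" using mmax l' by auto
  show ?thesis using Y.antisym[OF F.fS[OF mS] G.fS[OF mS] fg gf] .
qed

lemma pre_vc:
  assumes L: "L \<in> X.VV" and eq: "vcf L = vcg L"
  shows "{e \<in> E.S. h e \<in> L} \<in> E.VV \<and> vch {e \<in> E.S. h e \<in> L} = L"
proof
  let ?K = "{e \<in> E.S. h e \<in> L}"
  have LS: "L \<subseteq> X.S" using X.vc_subS[OF L] .
  have Lc: "closedin TX L" using X.vc_closed[OF L] .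
  have Lconv: "convex_set TX leX L" using L unfolding vc_set_def by auto
  have "closedin TE ?K" by (rule closedin_continuous_map_preimage[OF H.fcont Lc])
  moreover have "convex_set TE leE ?K"
    unfolding convex_set_def
  proof (intro ballI impI)
    fix e1 e2 e assume e: "e1 \<in> ?K" "e2 \<in> ?K" "e \<in> E.S" "leE e1 e \<and> leE e e2"
    then have "leX (h e1) (h e)" "leX (h e) (h e2)" using H.fmono by auto
    then have "h e \<in> L" using Lconv e H.fS unfolding convex_set_def by blast
    then show "e \<in> ?K" using e by auto
  qed
  ultimately show "?K \<in> E.VV" unfolding vc_set_def by auto
  show "vch ?K = L"
  proof
    have "h ` ?K \<subseteq> L" by auto
    then have "vch ?K \<subseteq> upc TX leX L \<inter> downc TX leX L"
      unfolding vc_map_def updownc_def upc_def downc_def by blast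
    then show "vch ?K \<subseteq> L" using X.vc_updown[OF L] by simp
    show "L \<subseteq> vch ?K"
    proof
      fix x assume x: "x \<in> L"
      have xS: "x \<in> X.S" using x LS by auto
      obtain m where m: "m \<in> L" "leX m x" "\<forall>y\<in>L. leX y m \<longrightarrow> y = m"
        by (rule X.exists_min[OF Lc x])
      have "f m = g m" by (rule min_eq[OF L eq m(1) m(3)])
      then obtain e where e: "e \<in> E.S" "h e = m" using h_onto m LS by blast
      obtain m' where m': "m' \<in> L" "leX x m'" "\<forall>y\<in>L. leX m' y \<longrightarrow> y = m'"
        by (rule X.exists_max[OF Lc x])
      have "f m' = g m'" by (rule max_eq[OF L eq m'(1) m'(3)])
      then obtain e' where e': "e' \<in> E.S" "h e' = m'" using h_onto m' LS by blast
      have "x \<in> upc TX leX (h ` ?K)" using e m xS unfolding upc_def by force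
      moreover have "x \<in> downc TX leX (h ` ?K)" using e' m' xS unfolding downc_def by force
      ultimately show "x \<in> vch ?K" unfolding vc_map_def updownc_def by auto
    qed
  qed
qed

lemma vfg: assumes K: "K \<in> E.VV" shows "vcf (vch K) = vcg (vch K)"
proof -
  have KS: "K \<subseteq> E.S" using E.vc_subS[OF K] .
  have hK: "h ` K \<subseteq> X.S" using H.img_sub[OF KS] .
  have "f ` h ` K = g ` h ` K" using hfg KS by (force simp: image_iff)
  then show ?thesis unfolding vc_map_def[of TX] vc_map_def[of TY]
    using F.updownc_img[OF hK] G.updownc_img[OF hK] unfolding vc_map_def by simp
qed

end


context eqs begin

lemma main: "is_equalizer_wrt TYPE('z)
           (vc_top TE leE) (vc_le TE leE) (vc_top TX leX) (vc_le TX leX)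
           (vc_top TY leY) (vc_le TY leY)
           (vc_map TX leX h) (vc_map TY leY f) (vc_map TY leY g)"
  unfolding is_equalizer_wrt_def
proof (intro conjI allI impI)
  show "compord (vc_top TE leE) (vc_le TE leE)" by (rule E.vc_compord)
  show "compord_mor (vc_top TE leE) (vc_le TE leE) (vc_top TX leX) (vc_le TX leX) vch"
    by (rule H.vcf_mor)
  show "\<forall>e\<in>topspace (vc_top TE leE). vcf (vch e) = vcg (vch e)"
    unfolding E.topspace_vc using vfg by blast
  fix TZ :: "'z topology" and leZ z
  assume A: "compord TZ leZ \<and> compord_mor TZ leZ (vc_top TX leX) (vc_le TX leX) z \<and>
       (\<forall>w\<in>topspace TZ. vcf (z w) = vcg (z w))"
  then have cZ: "compord TZ leZ" and mz: "compord_mor TZ leZ (vc_top TX leX) (vc_le TX leX) z"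
    and zfg: "\<And>w. w \<in> topspace TZ \<Longrightarrow> vcf (z w) = vcg (z w)" by auto
  have zcont: "continuous_map TZ (vc_top TX leX) z" using mz unfolding compord_mor_def by auto
  have zmono: "\<And>w1 w2. w1 \<in> topspace TZ \<Longrightarrow> w2 \<in> topspace TZ \<Longrightarrow> leZ w1 w2 \<Longrightarrow> vc_le TX leX (z w1) (z w2)"
    using mz unfolding compord_mor_def by auto
  have zS: "z w \<in> X.VV" if "w \<in> topspace TZ" for w
    using continuous_map_image_subset_topspace[OF zcont] that X.topspace_vc by auto
  define u where "u w = {e \<in> E.S. h e \<in> z w}" for w
  have pu: "u w \<in> E.VV" "vch (u w) = z w" if "w \<in> topspace TZ" for w
    using pre_vc[OF zS[OF that] zfg[OF that]] unfolding u_def by auto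
  have ucont: "continuous_map TZ (vc_top TE leE) u"
    unfolding continuous_map_closedin
  proof (intro conjI)
    show "u \<in> topspace TZ \<rightarrow> topspace (vc_top TE leE)"
      using pu E.topspace_vc by auto
  next
    show "\<forall>C. closedin (vc_top TE leE) C \<longrightarrow> closedin TZ {x \<in> topspace TZ. u x \<in> C}"
    proof (intro allI impI)
    fix C assume C: "closedin (vc_top TE leE) C"
    have CV: "C \<subseteq> E.VV" using closedin_subset[OF C] E.topspace_vc by auto
    have "compactin (vc_top TX leX) (vch ` C)"
      by (rule image_compactin[OF closedin_compact_space[OF E.vc_compact C] H.vcf_cont])
    then have cl: "closedin (vc_top TX leX) (vch ` C)"
      by (rule compactin_imp_closedin[OF X.vc_hausdorff])
    have "{w \<in> topspace TZ. u w \<in> C} = {w \<in> topspace TZ. z w \<in> vch ` C}"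
    proof (rule Collect_cong, rule conj_cong[OF refl])
      fix w assume w: "w \<in> topspace TZ"
      show "u w \<in> C \<longleftrightarrow> z w \<in> vch ` C"
      proof
        assume "u w \<in> C" then show "z w \<in> vch ` C" using pu[OF w] by force
      next
        assume "z w \<in> vch ` C"
        then obtain K where K: "K \<in> C" "z w = vch K" by auto
        then have "K = u w" using vch_inj[of K "u w"] CV pu[OF w] by auto
        then show "u w \<in> C" using K by simp
      qed
    qed
    then show "closedin TZ {w \<in> topspace TZ. u w \<in> C}"
      using closedin_continuous_map_preimage[OF zcont cl] by simp
  qed
  qed
  have umono: "vc_le TE leE (u w1) (u w2)"
    if "w1 \<in> topspace TZ" "w2 \<in> topspace TZ" "leZ w1 w2" for w1 w2
    using vch_refl[OF pu(1)[OF that(1)] pu(1)[OF that(2)]] zmono[OF that] pu(2) that by simp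
  have umor: "compord_mor TZ leZ (vc_top TE leE) (vc_le TE leE) u"
    unfolding compord_mor_def using ucont umono by blast
  show "\<exists>u. compord_mor TZ leZ (vc_top TE leE) (vc_le TE leE) u \<and>
             (\<forall>w\<in>topspace TZ. vch (u w) = z w) \<and>
             (\<forall>u'. compord_mor TZ leZ (vc_top TE leE) (vc_le TE leE) u' \<and>
                   (\<forall>w\<in>topspace TZ. vch (u' w) = z w) \<longrightarrow>
                   (\<forall>w\<in>topspace TZ. u' w = u w))"
  proof (intro exI conjI allI impI ballI)
    show "compord_mor TZ leZ (vc_top TE leE) (vc_le TE leE) u" by (rule umor)
    show "vch (u w) = z w" if "w \<in> topspace TZ" for w using pu(2)[OF that] .
    fix u' w assume u': "compord_mor TZ leZ (vc_top TE leE) (vc_le TE leE) u' \<and>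
                   (\<forall>w\<in>topspace TZ. vch (u' w) = z w)" and w: "w \<in> topspace TZ"
    have "u' w \<in> E.VV"
      using u' w continuous_map_image_subset_topspace E.topspace_vc unfolding compord_mor_def by blast
    then show "u' w = u w" using vch_inj[of "u' w" "u w"] pu[OF w] u' w by auto
  qed
qed

end

theorem proposition3p23:
  fixes TE :: "'e topology" and leE :: "'e \<Rightarrow> 'e \<Rightarrow> bool"
    and TX :: "'x topology" and leX :: "'x \<Rightarrow> 'x \<Rightarrow> bool"
    and TY :: "'y topology" and leY :: "'y \<Rightarrow> 'y \<Rightarrow> bool"
    and f g :: "'x \<Rightarrow> 'y" and k :: "'y \<Rightarrow> 'x" and h :: "'e \<Rightarrow> 'x"
  assumes "compord TX leX" and "compord TY leY" and "compord TE leE"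
    and "compord_mor TX leX TY leY f" and "compord_mor TX leX TY leY g"
    and "compord_mor TY leY TX leX k"
    and "\<forall>x\<in>topspace TX. k (f x) = x" and "\<forall>x\<in>topspace TX. k (g x) = x"
    and "is_equalizer_wrt TYPE('x) TE leE TX leX TY leY h f g"
  shows "is_equalizer_wrt TYPE('z)
           (vc_top TE leE) (vc_le TE leE) (vc_top TX leX) (vc_le TX leX)
           (vc_top TY leY) (vc_le TY leY)
           (vc_map TX leX h) (vc_map TY leY f) (vc_map TY leY g)"
proof -
  interpret eqs TE leE TX leX TY leY f g k h using assms by (unfold_locales) auto
  show ?thesis by (rule main)
qed


end
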